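(* Let $\kappa$ be any cardinal. The functors $N:\mathbf{MKF}_\kappa\to\mathbf{NFR}_\kappa$ and $H:\mathbf{NFR}_\kappa\to\mathbf{MKF}_\kappa$ form an equivalence of categories: for every $\kappa$-downward directed multi-relational Kripke frame $M=\langle W,S\rangle$, the identity map on $W$ is an isomorphism of multi-relational Kripke frames $M\to H(N(M))$, and for every $\kappa$-complete neighborhood frame $Z=\langle C,\nu\rangle$, the identity map on $C$ is an isomorphism of neighborhood frames $Z\to N(H(Z))$ (these identities being natural).
   Context: For a binary relation $R$ on $W$ and $x\in W$, $R[x]=\{y\in W\mid xRy\}$. A multi-relational Kripke frame is a pair $\langle W,S\rangle$ where $W$ is a non-empty set and $S$ is a non-empty set of binary relations on $W$. For a cardinal $\kappa$, it is $\kappa$-downward directed if for every $S'\subseteq S$ with $|S'|<\kappa$ there is $R\in S$ with $R\subseteq\bigcap S'$ (with $\bigcap\emptyset=W\times W$). A homomorphism of multi-relational Kripke frames $f:\langle W_1,S_1\rangle\to\langle W_2,S_2\rangle$ is a map $f:W_1\to W_2$ such that: (i) for every $x\in W_1$ and $R_2\in S_2$ there is $R_1\in S_1$ such that for all $y\in W_1$, $xR_1y$ implies $f(x)R_2f(y)$; (ii) for every $x\in W_1$ and $R_1\in S_1$ there is $R_2\in S_2$ such that for all $u\in W_2$, if $f(x)R_2u$ then there exists $y\in W_1$ with $xR_1y$ and $f(y)=u$. An isomorphism is a bijective homomorphism. $\mathbf{MKF}_\kappa$ is the category of $\kappa$-downward directed multi-relational Kripke frames with these homomorphisms. A neighborhood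 frame is a pair $\langle C,\nu\rangle$ with $C$ non-empty and $\nu:C\to\mathcal P(\mathcal P(C))$. It is $\kappa$-complete if $C\in\nu(c)$ for all $c$, $\nu(c)$ is upward closed under $\subseteq$ for all $c$, and $\bigcap S'\in\nu(c)$ for every $c\in C$ and every non-empty $S'\subseteq\nu(c)$ with $|S'|<\kappa$. A homomorphism of neighborhood frames $f:\langle C_1,\nu_1\rangle\to\langle C_2,\nu_2\rangle$ is a map $f:C_1\to C_2$ such that for all $c\in C_1$, $X\subseteq C_2$: $f^{-1}[X]\in\nu_1(c)\iff X\in\nu_2(f(c))$. $\mathbf{NFR}_\kappa$ is the category of $\kappa$-complete neighborhood frames with these homomorphisms. $N(\langle W,S\rangle)=\langle W,\nu_M\rangle$ with $\nu_M(x)=\{Y\subseteq W\mid R[x]\subseteq Y\text{ for some }R\in S\}$, and $N(f)=f$. $H(\langle C,\nu\rangle)=\langle C,\{R_v\mid v\in V_Z\}\rangle$ where $V_Z$ is the set of maps $v:C\to\mathcal P(C)$ with $v(x)\in\nu(x)$ for all $x$ and $R_v=\{(x,y)\mid y\in v(x)\}$; $H(f)=f$. *)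

theory Defs
  imports Main
begin

(* Cardinals are represented by cardinal orders  k :: 'k rel  with  Card_order k;
   "|S'| < kappa" is  (card_of S', k) \<in> ordLess. *)

type_synonym 'a mkf = "'a set \<times> ('a \<times> 'a) set set"
type_synonym 'a nfr = "'a set \<times> ('a \<Rightarrow> 'a set set)"

definition Rimg :: "('a \<times> 'a) set \<Rightarrow> 'a \<Rightarrow> 'a set" where
  "Rimg R x = {y. (x, y) \<in> R}"

definition mkf :: "'a mkf \<Rightarrow> bool" where
  "mkf M \<longleftrightarrow> fst M \<noteq> {} \<and> snd M \<noteq> {} \<and> (\<forall>R\<in>snd M. R \<subseteq> fst M \<times> fst M)"

definition downward_directed :: "'k rel \<Rightarrow> 'a mkf \<Rightarrow> bool" where
  "downward_directed k M \<longleftrightarrow>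
     (\<forall>S'. S' \<subseteq> snd M \<and> (card_of S', k) \<in> ordLess \<longrightarrow>
        (\<exists>R\<in>snd M. R \<subseteq> (fst M \<times> fst M) \<inter> \<Inter>S'))"

definition MKF :: "'k rel \<Rightarrow> 'a mkf \<Rightarrow> bool" where
  "MKF k M \<longleftrightarrow> mkf M \<and> downward_directed k M"

definition mkf_hom :: "('a \<Rightarrow> 'b) \<Rightarrow> 'a mkf \<Rightarrow> 'b mkf \<Rightarrow> bool" where
  "mkf_hom f M1 M2 \<longleftrightarrow>
     (\<forall>x\<in>fst M1. f x \<in> fst M2) \<and>
     (\<forall>x\<in>fst M1. \<forall>R2\<in>snd M2. \<exists>R1\<in>snd M1. \<forall>y\<in>fst M1.
         (x, y) \<in> R1 \<longrightarrow> (f x, f y) \<in> R2) \<and>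
     (\<forall>x\<in>fst M1. \<forall>R1\<in>snd M1. \<exists>R2\<in>snd M2. \<forall>u\<in>fst M2.
         (f x, u) \<in> R2 \<longrightarrow> (\<exists>y\<in>fst M1. (x, y) \<in> R1 \<and> f y = u))"

definition mkf_iso :: "('a \<Rightarrow> 'b) \<Rightarrow> 'a mkf \<Rightarrow> 'b mkf \<Rightarrow> bool" where
  "mkf_iso f M1 M2 \<longleftrightarrow> mkf_hom f M1 M2 \<and> bij_betw f (fst M1) (fst M2)"

definition nfr :: "'a nfr \<Rightarrow> bool" where
  "nfr Z \<longleftrightarrow> fst Z \<noteq> {} \<and> (\<forall>c\<in>fst Z. snd Z c \<subseteq> Pow (fst Z))"

definition complete :: "'k rel \<Rightarrow> 'a nfr \<Rightarrow> bool" where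
  "complete k Z \<longleftrightarrow>
     (\<forall>c\<in>fst Z. fst Z \<in> snd Z c) \<and>
     (\<forall>c\<in>fst Z. \<forall>X Y. X \<in> snd Z c \<and> X \<subseteq> Y \<and> Y \<subseteq> fst Z \<longrightarrow> Y \<in> snd Z c) \<and>
     (\<forall>c\<in>fst Z. \<forall>S'. S' \<noteq> {} \<and> S' \<subseteq> snd Z c \<and> (card_of S', k) \<in> ordLess
         \<longrightarrow> \<Inter>S' \<in> snd Z c)"

definition NFR :: "'k rel \<Rightarrow> 'a nfr \<Rightarrow> bool" where
  "NFR k Z \<longleftrightarrow> nfr Z \<and> complete k Z"

definition nfr_hom :: "('a \<Rightarrow> 'b) \<Rightarrow> 'a nfr \<Rightarrow> 'b nfr \<Rightarrow> bool" where
  "nfr_hom f Z1 Z2 \<longleftrightarrow>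
     (\<forall>c\<in>fst Z1. f c \<in> fst Z2) \<and>
     (\<forall>c\<in>fst Z1. \<forall>X. X \<subseteq> fst Z2 \<longrightarrow>
        ({c'\<in>fst Z1. f c' \<in> X} \<in> snd Z1 c \<longleftrightarrow> X \<in> snd Z2 (f c)))"

definition nfr_iso :: "('a \<Rightarrow> 'b) \<Rightarrow> 'a nfr \<Rightarrow> 'b nfr \<Rightarrow> bool" where
  "nfr_iso f Z1 Z2 \<longleftrightarrow> nfr_hom f Z1 Z2 \<and> bij_betw f (fst Z1) (fst Z2)"

(* The functor N on objects (on morphisms N f = f). *)
definition N_obj :: "'a mkf \<Rightarrow> 'a nfr" where
  "N_obj M = (fst M, \<lambda>x. {Y. Y \<subseteq> fst M \<and> (\<exists>R\<in>snd M. Rimg R x \<subseteq> Y)})"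

(* V_Z: choice maps v : C \<rightarrow> P(C) with v x \<in> \<nu> x; represented extensionally
   (v x = {} outside C) so that each map on C has a unique representative. *)
definition V_Z :: "'a nfr \<Rightarrow> ('a \<Rightarrow> 'a set) set" where
  "V_Z Z = {v. (\<forall>x\<in>fst Z. v x \<in> snd Z x) \<and> (\<forall>x. x \<notin> fst Z \<longrightarrow> v x = {})}"

definition R_v :: "'a nfr \<Rightarrow> ('a \<Rightarrow> 'a set) \<Rightarrow> ('a \<times> 'a) set" where
  "R_v Z v = {(x, y). x \<in> fst Z \<and> y \<in> v x}"

(* The functor H on objects (on morphisms H f = f). *)
definition H_obj :: "'a nfr \<Rightarrow> 'a mkf" where
  "H_obj Z = (fst Z, R_v Z ` V_Z Z)"

end

theory Submission
  imports Defs
begin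

lemma Rimg_Rv: "x \<in> fst Z \<Longrightarrow> Rimg (R_v Z v) x = v x"
  by (auto simp: Rimg_def R_v_def)

lemma NFR_D:
  assumes "NFR k (C, nu)"
  shows "C \<noteq> {}" "\<forall>c\<in>C. nu c \<subseteq> Pow C" "\<forall>c\<in>C. C \<in> nu c"
    "\<forall>c\<in>C. \<forall>X Y. X \<in> nu c \<and> X \<subseteq> Y \<and> Y \<subseteq> C \<longrightarrow> Y \<in> nu c"
    "\<forall>c\<in>C. \<forall>S'. S' \<noteq> {} \<and> S' \<subseteq> nu c \<and> (card_of S', k) \<in> ordLess \<longrightarrow> \<Inter>S' \<in> nu c"
proof -
  note H = assms[unfolded NFR_def nfr_def complete_def fst_conv snd_conv]
  from H show "C \<noteq> {}" by (elim conjE)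
  from H show "\<forall>c\<in>C. nu c \<subseteq> Pow C" by (elim conjE)
  from H show "\<forall>c\<in>C. C \<in> nu c" by (elim conjE)
  from H show "\<forall>c\<in>C. \<forall>X Y. X \<in> nu c \<and> X \<subseteq> Y \<and> Y \<subseteq> C \<longrightarrow> Y \<in> nu c" by (elim conjE)
  from H show "\<forall>c\<in>C. \<forall>S'. S' \<noteq> {} \<and> S' \<subseteq> nu c \<and> (card_of S', k) \<in> ordLess \<longrightarrow> \<Inter>S' \<in> nu c" by (elim conjE)
qed
lemma nfr_hom_D:
  assumes "nfr_hom f (C1, nu1) (C2, nu2)"
  shows "\<forall>c\<in>C1. f c \<in> C2" "\<forall>c\<in>C1. \<forall>X. X \<subseteq> C2 \<longrightarrow> ({c'\<in>C1. f c' \<in> X} \<in> nu1 c \<longleftrightarrow> X \<in> nu2 (f c))"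
proof -
  note H = assms[unfolded nfr_hom_def fst_conv snd_conv]
  from H show "\<forall>c\<in>C1. f c \<in> C2" by (elim conjE)
  from H show "\<forall>c\<in>C1. \<forall>X. X \<subseteq> C2 \<longrightarrow> ({c'\<in>C1. f c' \<in> X} \<in> nu1 c \<longleftrightarrow> X \<in> nu2 (f c))" by (elim conjE)
qed

lemma p1: assumes "MKF k M" shows "NFR k (N_obj M)"
proof -
  obtain W S where M: "M = (W, S)" by force
  have ne: "W \<noteq> {}" "S \<noteq> {}" and sub: "\<forall>R\<in>S. R \<subseteq> W \<times> W"
    using assms by (auto simp: MKF_def mkf_def M)
  have dd: "\<And>S'. S' \<subseteq> S \<Longrightarrow> (card_of S', k) \<in> ordLess \<Longrightarrow> \<exists>R\<in>S. R \<subseteq> (W \<times> W) \<inter> \<Inter>S'"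
    using assms by (auto simp: MKF_def downward_directed_def M)
  have c1: "\<forall>c\<in>W. W \<in> {Y. Y \<subseteq> W \<and> (\<exists>R\<in>S. Rimg R c \<subseteq> Y)}"
  proof
    fix c assume "c \<in> W"
    obtain R where "R \<in> S" using ne by blast
    then have "Rimg R c \<subseteq> W" using sub by (auto simp: Rimg_def)
    then show "W \<in> {Y. Y \<subseteq> W \<and> (\<exists>R\<in>S. Rimg R c \<subseteq> Y)}" using \<open>R \<in> S\<close> by blast
  qed
  have c3: "\<Inter>S' \<in> {Y. Y \<subseteq> W \<and> (\<exists>R\<in>S. Rimg R c \<subseteq> Y)}"
    if hyp: "S' \<noteq> {}" "S' \<subseteq> {Y. Y \<subseteq> W \<and> (\<exists>R\<in>S. Rimg R c \<subseteq> Y)}" "(card_of S', k) \<in> ordLess" for c S'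
  proof -
    have "\<forall>Y\<in>S'. \<exists>R. R \<in> S \<and> Rimg R c \<subseteq> Y" using that(2) by blast
    then obtain g where g: "\<And>Y. Y \<in> S' \<Longrightarrow> g Y \<in> S \<and> Rimg (g Y) c \<subseteq> Y"
      using bchoice[of S' "\<lambda>Y R. R \<in> S \<and> Rimg R c \<subseteq> Y"] by blast
    have cl: "(card_of (g ` S'), k) \<in> ordLess"
      using ordLeq_ordLess_trans[OF card_of_image that(3)] .
    have gs: "g ` S' \<subseteq> S" using g by blast
    obtain R where R: "R \<in> S" "R \<subseteq> (W \<times> W) \<inter> \<Inter>(g ` S')" using dd[OF gs cl] by blast
    have Rg: "\<And>Y. Y \<in> S' \<Longrightarrow> R \<subseteq> g Y" using R(2) by blast
    have "Rimg R c \<subseteq> \<Inter>S'"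
    proof (intro subsetI InterI)
      fix y Y assume y: "y \<in> Rimg R c" and Y: "Y \<in> S'"
      have "y \<in> Rimg (g Y) c" using y Rg[OF Y] by (auto simp: Rimg_def)
      then show "y \<in> Y" using g[OF Y] by blast
    qed
    moreover have "\<Inter>S' \<subseteq> W"
    proof -
      obtain Y where "Y \<in> S'" using hyp(1) by blast
      then have "\<Inter>S' \<subseteq> Y" "Y \<subseteq> W" using hyp(2) by auto
      then show ?thesis by blast
    qed
    ultimately show ?thesis using R(1) by blast
  qed
  have c2: "\<forall>c\<in>W. \<forall>X Y. X \<in> {Y. Y \<subseteq> W \<and> (\<exists>R\<in>S. Rimg R c \<subseteq> Y)} \<and> X \<subseteq> Y \<and> Y \<subseteq> W
       \<longrightarrow> Y \<in> {Y. Y \<subseteq> W \<and> (\<exists>R\<in>S. Rimg R c \<subseteq> Y)}"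
    by blast
  have c4: "\<forall>c\<in>W. {Y. Y \<subseteq> W \<and> (\<exists>R\<in>S. Rimg R c \<subseteq> Y)} \<subseteq> Pow W" by blast
  have c3': "\<forall>c\<in>W. \<forall>S'. S' \<noteq> {} \<and> S' \<subseteq> {Y. Y \<subseteq> W \<and> (\<exists>R\<in>S. Rimg R c \<subseteq> Y)} \<and> (card_of S', k) \<in> ordLess
         \<longrightarrow> \<Inter>S' \<in> {Y. Y \<subseteq> W \<and> (\<exists>R\<in>S. Rimg R c \<subseteq> Y)}"
    using c3 by blast
  show ?thesis
    unfolding NFR_def nfr_def complete_def N_obj_def M fst_conv snd_conv
    using ne(1) c1 c2 c3' c4 by (intro conjI)
qed

lemma p2: assumes "NFR k Z" shows "MKF k (H_obj Z)"
proof -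
  obtain C nu where Z: "Z = (C, nu)" by force
  have ne: "C \<noteq> {}" and sub: "\<forall>c\<in>C. nu c \<subseteq> Pow C"
    and top: "\<forall>c\<in>C. C \<in> nu c"
    and inter: "\<And>c S'. c \<in> C \<Longrightarrow> S' \<noteq> {} \<Longrightarrow> S' \<subseteq> nu c \<Longrightarrow> (card_of S', k) \<in> ordLess \<Longrightarrow> \<Inter>S' \<in> nu c"
    using assms by (auto simp: NFR_def nfr_def complete_def Z)
  define v0 where "v0 = (\<lambda>x. if x \<in> C then C else {})"
  have v0: "v0 \<in> V_Z Z" using top by (auto simp: V_Z_def v0_def Z)
  have Rsub: "R_v Z v \<subseteq> C \<times> C" if "v \<in> V_Z Z" for v
    using that sub by (auto simp: V_Z_def R_v_def Z)
  have dd: "\<exists>R\<in>R_v Z ` V_Z Z. R \<subseteq> (C \<times> C) \<inter> \<Inter>S'"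
    if S': "S' \<subseteq> R_v Z ` V_Z Z" "(card_of S', k) \<in> ordLess" for S'
  proof (cases "S' = {}")
    case True then show ?thesis using v0 Rsub by blast
  next
    case False
    define w where "w = (\<lambda>x. if x \<in> C then \<Inter>((\<lambda>R. Rimg R x) ` S') else {})"
    have wV: "w \<in> V_Z Z"
    proof -
      have "w x \<in> nu x" if x: "x \<in> C" for x
      proof -
        have "(card_of ((\<lambda>R. Rimg R x) ` S'), k) \<in> ordLess"
          using ordLeq_ordLess_trans[OF card_of_image S'(2)] .
        moreover have "(\<lambda>R. Rimg R x) ` S' \<subseteq> nu x"
        proof
          fix Y assume "Y \<in> (\<lambda>R. Rimg R x) ` S'"
          then obtain v where "v \<in> V_Z Z" "Y = Rimg (R_v Z v) x" using S'(1) by blast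
          then show "Y \<in> nu x" using x Rimg_Rv[of x Z v] by (auto simp: V_Z_def Z)
        qed
        ultimately show ?thesis using inter[OF x] False x by (simp add: w_def)
      qed
      then show ?thesis by (auto simp: V_Z_def Z w_def)
    qed
    have wS: "R_v Z w \<subseteq> \<Inter>S'"
    proof (intro subsetI InterI)
      fix p R assume p: "p \<in> R_v Z w" and R: "R \<in> S'"
      obtain x y where xy: "p = (x, y)" "x \<in> C" "y \<in> w x"
        using p by (auto simp: R_v_def Z)
      have "y \<in> Rimg R x" using xy(2,3) R by (simp add: w_def)
      then show "p \<in> R" using xy(1) by (simp add: Rimg_def)
    qed
    have "R_v Z w \<subseteq> (C \<times> C) \<inter> \<Inter>S'" using Rsub[OF wV] wS by (rule Int_greatest)
    moreover have "R_v Z w \<in> R_v Z ` V_Z Z" using wV by (rule imageI)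
    ultimately show ?thesis by (rule bexI)
  qed
  show ?thesis
    unfolding MKF_def mkf_def downward_directed_def H_obj_def fst_conv snd_conv
    using ne v0 Rsub dd by (auto simp: Z)
qed

lemma p3: assumes "MKF k M1" "MKF k M2" "mkf_hom f M1 M2"
  shows "nfr_hom f (N_obj M1) (N_obj M2)"
proof -
  obtain W1 S1 where M1: "M1 = (W1, S1)" by force
  obtain W2 S2 where M2: "M2 = (W2, S2)" by force
  have sub1: "\<forall>R\<in>S1. R \<subseteq> W1 \<times> W1" and sub2: "\<forall>R\<in>S2. R \<subseteq> W2 \<times> W2"
    using assms by (auto simp: MKF_def mkf_def M1 M2)
  have fm: "\<forall>x\<in>W1. f x \<in> W2"
    and h1: "\<forall>x\<in>W1. \<forall>R2\<in>S2. \<exists>R1\<in>S1. \<forall>y\<in>W1. (x, y) \<in> R1 \<longrightarrow> (f x, f y) \<in> R2"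
    and h2: "\<forall>x\<in>W1. \<forall>R1\<in>S1. \<exists>R2\<in>S2. \<forall>u\<in>W2. (f x, u) \<in> R2 \<longrightarrow> (\<exists>y\<in>W1. (x, y) \<in> R1 \<and> f y = u)"
    using assms(3) by (auto simp: mkf_hom_def M1 M2)
  have eq: "(\<exists>R\<in>S1. Rimg R c \<subseteq> {c'\<in>W1. f c' \<in> X}) \<longleftrightarrow> (\<exists>R\<in>S2. Rimg R (f c) \<subseteq> X)"
    if c: "c \<in> W1" and X: "X \<subseteq> W2" for c X
  proof
    assume "\<exists>R\<in>S1. Rimg R c \<subseteq> {c'\<in>W1. f c' \<in> X}"
    then obtain R1 where R1: "R1 \<in> S1" "Rimg R1 c \<subseteq> {c'\<in>W1. f c' \<in> X}" by blast
    obtain R2 where R2: "R2 \<in> S2" "\<forall>u\<in>W2. (f c, u) \<in> R2 \<longrightarrow> (\<exists>y\<in>W1. (c, y) \<in> R1 \<and> f y = u)"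
      using h2 c R1(1) by blast
    have "Rimg R2 (f c) \<subseteq> X"
    proof
      fix u assume u: "u \<in> Rimg R2 (f c)"
      then have "u \<in> W2" using sub2 R2(1) by (auto simp: Rimg_def)
      then obtain y where "y \<in> W1" "(c, y) \<in> R1" "f y = u" using R2(2) u by (auto simp: Rimg_def)
      then show "u \<in> X" using R1(2) by (auto simp: Rimg_def)
    qed
    then show "\<exists>R\<in>S2. Rimg R (f c) \<subseteq> X" using R2 by blast
  next
    assume "\<exists>R\<in>S2. Rimg R (f c) \<subseteq> X"
    then obtain R2 where R2: "R2 \<in> S2" "Rimg R2 (f c) \<subseteq> X" by blast
    obtain R1 where R1: "R1 \<in> S1" "\<forall>y\<in>W1. (c, y) \<in> R1 \<longrightarrow> (f c, f y) \<in> R2"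
      using h1 c R2(1) by blast
    have "Rimg R1 c \<subseteq> {c'\<in>W1. f c' \<in> X}"
    proof
      fix y assume y: "y \<in> Rimg R1 c"
      then have "y \<in> W1" using sub1 R1(1) by (auto simp: Rimg_def)
      then show "y \<in> {c'\<in>W1. f c' \<in> X}" using R1(2) R2(2) y by (auto simp: Rimg_def)
    qed
    then show "\<exists>R\<in>S1. Rimg R c \<subseteq> {c'\<in>W1. f c' \<in> X}" using R1 by blast
  qed
  show ?thesis
    unfolding nfr_hom_def N_obj_def M1 M2 fst_conv snd_conv
    using fm eq by auto
qed

lemma p4: assumes "NFR k Z1" "NFR k Z2" "nfr_hom f Z1 Z2"
  shows "mkf_hom f (H_obj Z1) (H_obj Z2)"
proof -
  obtain C1 nu1 where Z1: "Z1 = (C1, nu1)" by force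
  obtain C2 nu2 where Z2: "Z2 = (C2, nu2)" by force
  have sub1: "\<forall>c\<in>C1. nu1 c \<subseteq> Pow C1" and sub2: "\<forall>c\<in>C2. nu2 c \<subseteq> Pow C2"
    and up1: "\<forall>c\<in>C1. \<forall>X Y. X \<in> nu1 c \<and> X \<subseteq> Y \<and> Y \<subseteq> C1 \<longrightarrow> Y \<in> nu1 c"
    and top2: "\<forall>c\<in>C2. C2 \<in> nu2 c"
    using NFR_D[OF assms(1)[unfolded Z1]] NFR_D[OF assms(2)[unfolded Z2]] by - (assumption)+
  have fm: "\<forall>c\<in>C1. f c \<in> C2"
    and hom: "\<forall>c\<in>C1. \<forall>X. X \<subseteq> C2 \<longrightarrow> ({c'\<in>C1. f c' \<in> X} \<in> nu1 c \<longleftrightarrow> X \<in> nu2 (f c))"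
    using nfr_hom_D[OF assms(3)[unfolded Z1 Z2]] by - (assumption)+
  have i: "\<exists>R1\<in>R_v Z1 ` V_Z Z1. \<forall>y\<in>C1. (x, y) \<in> R1 \<longrightarrow> (f x, f y) \<in> R2"
    if x: "x \<in> C1" and R2: "R2 \<in> R_v Z2 ` V_Z Z2" for x R2
  proof -
    obtain v2 where v2: "v2 \<in> V_Z Z2" "R2 = R_v Z2 v2" using R2 by blast
    define v1 where "v1 = (\<lambda>x'. if x' \<in> C1 then {y\<in>C1. f y \<in> v2 (f x')} else {})"
    have "v1 \<in> V_Z Z1"
    proof -
      have "v1 x' \<in> nu1 x'" if "x' \<in> C1" for x'
      proof -
        have fx: "f x' \<in> C2" using fm that by blast
        have a: "v2 (f x') \<in> nu2 (f x')" using v2(1) fx by (simp add: V_Z_def Z2)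
        have b: "v2 (f x') \<subseteq> C2" using a sub2 fx by blast
        have "{c'\<in>C1. f c' \<in> v2 (f x')} \<in> nu1 x'" using hom[rule_format, OF that b] a by (rule iffD2)
        then show ?thesis using that by (simp add: v1_def)
      qed
      then show ?thesis by (auto simp: V_Z_def Z1 v1_def)
    qed
    moreover have "\<forall>y\<in>C1. (x, y) \<in> R_v Z1 v1 \<longrightarrow> (f x, f y) \<in> R2"
      using x fm by (auto simp: R_v_def v1_def v2 Z1 Z2)
    ultimately show ?thesis by blast
  qed
  have ii: "\<exists>R2\<in>R_v Z2 ` V_Z Z2. \<forall>u\<in>C2. (f x, u) \<in> R2 \<longrightarrow> (\<exists>y\<in>C1. (x, y) \<in> R1 \<and> f y = u)"
    if x: "x \<in> C1" and R1: "R1 \<in> R_v Z1 ` V_Z Z1" for x R1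
  proof -
    obtain v1 where v1: "v1 \<in> V_Z Z1" "R1 = R_v Z1 v1" using R1 by blast
    have v1x: "v1 x \<in> nu1 x" using v1(1) x by (auto simp: V_Z_def Z1)
    have v1C: "v1 x \<subseteq> C1" using v1x sub1 x by blast
    define v2 where "v2 = (\<lambda>z. if z = f x then f ` v1 x else if z \<in> C2 then C2 else {})"
    have img: "f ` v1 x \<in> nu2 (f x)"
    proof -
      have fC: "f ` v1 x \<subseteq> C2" using v1C fm by blast
      have sup: "v1 x \<subseteq> {c'\<in>C1. f c' \<in> f ` v1 x}" using v1C by blast
      have pre: "{c'\<in>C1. f c' \<in> f ` v1 x} \<in> nu1 x"
        by (rule up1[rule_format, OF x, of "v1 x"]) (use v1x sup in blast)
      show ?thesis using hom[rule_format, OF x fC] pre by (rule iffD1)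
    qed
    have "v2 \<in> V_Z Z2"
      using img top2 fm x by (auto simp: V_Z_def Z2 v2_def)
    moreover have "\<forall>u\<in>C2. (f x, u) \<in> R_v Z2 v2 \<longrightarrow> (\<exists>y\<in>C1. (x, y) \<in> R1 \<and> f y = u)"
      using x v1C by (auto simp: R_v_def v2_def v1 Z1 Z2)
    ultimately show ?thesis by blast
  qed
  show ?thesis
    unfolding mkf_hom_def H_obj_def fst_conv snd_conv
    using fm i ii by (simp add: Z1 Z2)
qed

lemma p5: assumes "MKF k M" shows "mkf_iso id M (H_obj (N_obj M))"
proof -
  obtain W S where M: "M = (W, S)" by force
  have sub: "\<forall>R\<in>S. R \<subseteq> W \<times> W" using assms by (auto simp: MKF_def mkf_def M)
  let ?Z = "N_obj M"
  have fstZ: "fst ?Z = W" by (simp add: N_obj_def M)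
  have i: "\<exists>R1\<in>S. \<forall>y\<in>W. (x, y) \<in> R1 \<longrightarrow> (x, y) \<in> R2"
    if x: "x \<in> W" and R2: "R2 \<in> R_v ?Z ` V_Z ?Z" for x R2
  proof -
    obtain v where v: "v \<in> V_Z ?Z" "R2 = R_v ?Z v" using R2 by blast
    have "v x \<in> snd ?Z x" using v(1) x fstZ by (auto simp: V_Z_def)
    then obtain R where "R \<in> S" "Rimg R x \<subseteq> v x" by (auto simp: N_obj_def M)
    then show ?thesis using x fstZ by (auto simp: v R_v_def Rimg_def)
  qed
  have ii: "\<exists>R2\<in>R_v ?Z ` V_Z ?Z. \<forall>u\<in>W. (x, u) \<in> R2 \<longrightarrow> (\<exists>y\<in>W. (x, y) \<in> R1 \<and> y = u)"
    if x: "x \<in> W" and R1: "R1 \<in> S" for x R1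
  proof -
    define v where "v = (\<lambda>y. if y \<in> W then Rimg R1 y else {})"
    have "v \<in> V_Z ?Z"
      using R1 sub by (auto simp: V_Z_def N_obj_def M v_def Rimg_def)
    moreover have "\<forall>u\<in>W. (x, u) \<in> R_v ?Z v \<longrightarrow> (\<exists>y\<in>W. (x, y) \<in> R1 \<and> y = u)"
      by (auto simp: R_v_def v_def Rimg_def fstZ)
    ultimately show ?thesis by blast
  qed
  have fM: "fst M = W" "snd M = S" by (simp_all add: M)
  have hf: "fst (H_obj ?Z) = W" "snd (H_obj ?Z) = R_v ?Z ` V_Z ?Z" by (simp_all add: H_obj_def fstZ)
  show ?thesis
    unfolding mkf_iso_def mkf_hom_def hf fM id_apply
  proof (intro conjI)
    show "\<forall>x\<in>W. x \<in> W" by blast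
    show "\<forall>x\<in>W. \<forall>R2\<in>R_v ?Z ` V_Z ?Z. \<exists>R1\<in>S. \<forall>y\<in>W. (x, y) \<in> R1 \<longrightarrow> (x, y) \<in> R2"
      using i by (intro ballI)
    show "\<forall>x\<in>W. \<forall>R1\<in>S. \<exists>R2\<in>R_v ?Z ` V_Z ?Z. \<forall>u\<in>W. (x, u) \<in> R2 \<longrightarrow> (\<exists>y\<in>W. (x, y) \<in> R1 \<and> y = u)"
      using ii by (intro ballI)
    show "bij_betw (\<lambda>x. x) W W" using bij_betw_id unfolding id_def .
  qed
qed

lemma p6: assumes "NFR k Z" shows "nfr_iso id Z (N_obj (H_obj Z))"
proof -
  obtain C nu where Z: "Z = (C, nu)" by force
  have sub: "\<forall>c\<in>C. nu c \<subseteq> Pow C"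
    and up: "\<forall>c\<in>C. \<forall>X Y. X \<in> nu c \<and> X \<subseteq> Y \<and> Y \<subseteq> C \<longrightarrow> Y \<in> nu c"
    and top: "\<forall>c\<in>C. C \<in> nu c"
    using assms by (auto simp: NFR_def nfr_def complete_def Z)
  have eq: "X \<in> nu c \<longleftrightarrow> (\<exists>R\<in>R_v Z ` V_Z Z. Rimg R c \<subseteq> X)"
    if c: "c \<in> C" and X: "X \<subseteq> C" for c X
  proof
    assume Xn: "X \<in> nu c"
    define v where "v = (\<lambda>y. if y = c then X else if y \<in> C then C else {})"
    have "v \<in> V_Z Z" using Xn top c by (auto simp: V_Z_def Z v_def)
    moreover have "Rimg (R_v Z v) c \<subseteq> X" using c by (auto simp: Rimg_def R_v_def v_def)
    ultimately show "\<exists>R\<in>R_v Z ` V_Z Z. Rimg R c \<subseteq> X" by blast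
  next
    assume "\<exists>R\<in>R_v Z ` V_Z Z. Rimg R c \<subseteq> X"
    then obtain v where v: "v \<in> V_Z Z" "Rimg (R_v Z v) c \<subseteq> X" by blast
    have "v c \<in> nu c" using v(1) c by (auto simp: V_Z_def Z)
    moreover have "v c \<subseteq> X" using v(2) Rimg_Rv[of c Z v] c by (simp add: Z)
    ultimately show "X \<in> nu c" using up c X by blast
  qed
  have s: "{c' \<in> C. c' \<in> X} = X" if "X \<subseteq> C" for X using that by blast
  show ?thesis
    unfolding nfr_iso_def nfr_hom_def
    using eq s by (auto simp: N_obj_def H_obj_def Z)
qed

theorem theorem6p4:
  fixes k :: "'k rel"
  assumes "Card_order k"
  shows
    "(\<forall>M :: 'a mkf. MKF k M \<longrightarrow> NFR k (N_obj M)) \<and>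
     (\<forall>Z :: 'a nfr. NFR k Z \<longrightarrow> MKF k (H_obj Z)) \<and>
     (\<forall>(M1 :: 'a mkf) (M2 :: 'b mkf) f. MKF k M1 \<and> MKF k M2 \<and> mkf_hom f M1 M2
         \<longrightarrow> nfr_hom f (N_obj M1) (N_obj M2)) \<and>
     (\<forall>(Z1 :: 'a nfr) (Z2 :: 'b nfr) f. NFR k Z1 \<and> NFR k Z2 \<and> nfr_hom f Z1 Z2
         \<longrightarrow> mkf_hom f (H_obj Z1) (H_obj Z2)) \<and>
     (\<forall>M :: 'a mkf. MKF k M \<longrightarrow> mkf_iso id M (H_obj (N_obj M))) \<and>
     (\<forall>Z :: 'a nfr. NFR k Z \<longrightarrow> nfr_iso id Z (N_obj (H_obj Z)))"
proof (intro conjI allI impI)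
  show "\<And>M :: 'a mkf. MKF k M \<Longrightarrow> NFR k (N_obj M)" by (rule p1)
  show "\<And>Z :: 'a nfr. NFR k Z \<Longrightarrow> MKF k (H_obj Z)" by (rule p2)
  show "\<And>(M1 :: 'a mkf) (M2 :: 'b mkf) f. MKF k M1 \<and> MKF k M2 \<and> mkf_hom f M1 M2
         \<Longrightarrow> nfr_hom f (N_obj M1) (N_obj M2)" using p3 by blast
  show "\<And>(Z1 :: 'a nfr) (Z2 :: 'b nfr) f. NFR k Z1 \<and> NFR k Z2 \<and> nfr_hom f Z1 Z2
         \<Longrightarrow> mkf_hom f (H_obj Z1) (H_obj Z2)" using p4 by blast
  show "\<And>M :: 'a mkf. MKF k M \<Longrightarrow> mkf_iso id M (H_obj (N_obj M))" by (rule p5)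
  show "\<And>Z :: 'a nfr. NFR k Z \<Longrightarrow> nfr_iso id Z (N_obj (H_obj Z))" by (rule p6)
qed

end
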